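(* Let $\mathcal{X}=G^{\min}/P$ be the affine Grassmannian of the minimal affine Kac–Moody group $\widehat{SL_2}$, and let $c^k_{n,m}\in\mathbb{Z}[\alpha_0,\alpha_1]$ be the $T$-equivariant Schubert structure constants, $\hat{\varepsilon}_n\cdot\hat{\varepsilon}_m=\sum_{k=\max\{n,m\}}^{n+m}c^k_{n,m}\hat{\varepsilon}_k$. Then for all integers $n,m\ge1$, $c^{n+m}_{n,m}=\binom{n+m}{n}$ and $$c^{n+m-1}_{n,m}= \begin{cases} \frac{1}{4}\cdot\frac{(n+m)!}{(n-1)!(m-1)!}(\alpha_0+\alpha_1) & n,m\text{ even},\\[1ex] \frac{1}{4}\cdot\frac{(n+m)!}{n!\,m!}\big((1+nm)\alpha_0+(-1+nm)\alpha_1\big) & n,m\text{ odd},\\[1ex] \frac{1}{4}\cdot\frac{(n+m-1)!}{(n-1)!\,m!}\big((-1+nm+m^2)\alpha_0+(1+nm+m^2)\alpha_1\big) & n\text{ even}, m\text{ odd},\\[1ex] \frac{1}{4}\cdot\frac{(n+m-1)!}{n!\,(m-1)!}\big((-1+nm+n^2)\alpha_0+(1+nm+n^2)\alpha_1\big) & n\text{ odd}, m\text{ even}. \end{cases}$$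
   Context: $T$ is the adjoint torus of $\widehat{SL_2}$, $H^\bullet_T(\mathrm{pt})=\mathbb{Z}[\alpha_0,\alpha_1]$ (polynomials in the simple roots), and $\{\hat{\varepsilon}_i\}_{i\ge0}$ is the $T$-equivariant Schubert basis of $H^\bullet_T(\mathcal{X})$ (Kumar's basis), indexed by $w_i$, the alternating word of length $i$ in $s_0,s_1$ ending in $s_0$, where $P$ is the maximal parabolic with Weyl group $\{e,s_1\}$. It satisfies $\hat\varepsilon_0=1$ and the equivariant Chevalley formula $\hat{\varepsilon}_1\cdot\hat{\varepsilon}_m=q_m\hat{\varepsilon}_m+(m+1)\hat{\varepsilon}_{m+1}$ with $q_m=\lceil m/2\rceil^2\alpha_0+(\lfloor m/2\rfloor^2+\lfloor m/2\rfloor)\alpha_1$. The constant $c^k_{n,m}$ is homogeneous of degree $n+m-k$ in $\alpha_0,\alpha_1$. *)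

theory Defs
  imports Complex_Main
begin

text \<open>Equivariant Chevalley coefficient
  q_m = ceil(m/2)^2 alpha_0 + (floor(m/2)^2 + floor(m/2)) alpha_1,
  evaluated at a point (a0, a1) for the simple roots.\<close>
definition chev_q :: "real \<Rightarrow> real \<Rightarrow> nat \<Rightarrow> real" where
  "chev_q a0 a1 m = real (((m + 1) div 2)^2) * a0 + real ((m div 2)^2 + m div 2) * a1"

text \<open>c n m k stands for the structure constant c^k_{n,m} (specialised at
  alpha_0 = a0, alpha_1 = a1): eps_n * eps_m = sum_k c^k_{n,m} eps_k.
  The predicate collects the defining properties of the equivariant Schubert
  structure constants of the affine Grassmannian of affine SL_2: support in
  max n m .. n+m, commutativity, eps_0 = 1, the equivariant Chevalley formula,
  and associativity.  These determine the constants uniquely.\<close>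
definition schubert_consts :: "real \<Rightarrow> real \<Rightarrow> (nat \<Rightarrow> nat \<Rightarrow> nat \<Rightarrow> real) \<Rightarrow> bool" where
  "schubert_consts a0 a1 c \<longleftrightarrow>
     (\<forall>n m k. c n m k \<noteq> 0 \<longrightarrow> max n m \<le> k \<and> k \<le> n + m) \<and>
     (\<forall>n m k. c n m k = c m n k) \<and>
     (\<forall>m k. c 0 m k = (if k = m then 1 else 0)) \<and>
     (\<forall>m k. c 1 m k = (if k = m then chev_q a0 a1 m
                         else if k = m + 1 then real (m + 1) else 0)) \<and>
     (\<forall>n m p l. (\<Sum>k\<le>n + m. c n m k * c k p l) = (\<Sum>k\<le>m + p. c m p k * c n k l))"

end

theory Submission
  imports Defs
begin

lemma rec_c:
  assumes S: "schubert_consts a0 a1 c" and l: "l \<ge> 1"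
  shows "real (m+1) * c (m+1) p l = (chev_q a0 a1 l - chev_q a0 a1 m) * c m p l + real l * c m p (l-1)"
proof -
  have supp: "\<And>n m k. c n m k \<noteq> 0 \<Longrightarrow> max n m \<le> k \<and> k \<le> n + m"
   and c1: "\<And>m k. c 1 m k = (if k = m then chev_q a0 a1 m
                         else if k = m + 1 then real (m + 1) else 0)"
   and assoc: "\<And>n m p l. (\<Sum>k\<le>n + m. c n m k * c k p l) = (\<Sum>k\<le>m + p. c m p k * c n k l)"
    using S unfolding schubert_consts_def by blast+
  have A: "(\<Sum>k\<le>1+m. c 1 m k * c k p l) = (\<Sum>k\<le>m+p. c m p k * c 1 k l)" by (rule assoc)
  have "(\<Sum>k\<le>1+m. c 1 m k * c k p l) = (\<Sum>k\<le>1+m. (if k=m then chev_q a0 a1 m * c m p l else 0) + (if k = m+1 then real (m+1) * c (m+1) p l else 0))"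
    by (rule sum.cong) (auto simp: c1[unfolded One_nat_def])
  then have L: "(\<Sum>k\<le>1+m. c 1 m k * c k p l) = chev_q a0 a1 m * c m p l + real (m+1) * c (m+1) p l"
    by (simp add: sum.distrib)
  have "(\<Sum>k\<le>m+p. c m p k * c 1 k l) = (\<Sum>k\<le>m+p. (if k=l then c m p l * chev_q a0 a1 l else 0) + (if k = l - 1 then c m p (l-1) * real l else 0))"
    by (rule sum.cong) (use l in \<open>auto simp: c1[unfolded One_nat_def]\<close>)
  then have R0: "(\<Sum>k\<le>m+p. c m p k * c 1 k l) = (if l \<le> m+p then c m p l * chev_q a0 a1 l else 0) + (if l - 1 \<le> m+p then c m p (l-1) * real l else 0)"
    by (simp add: sum.distrib)
  have z1: "\<not> l \<le> m+p \<Longrightarrow> c m p l = 0" using supp[of m p l] by force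
  have z2: "\<not> l - 1 \<le> m+p \<Longrightarrow> c m p (l-1) = 0" using supp[of m p "l-1"] by force
  have R: "(\<Sum>k\<le>m+p. c m p k * c 1 k l) = c m p l * chev_q a0 a1 l + c m p (l-1) * real l"
    using R0 z1 z2 by auto
  show ?thesis using A L R by (simp add: algebra_simps)
qed

lemma top_c:
  assumes S: "schubert_consts a0 a1 c"
  shows "c n m (n + m) = real ((n + m) choose n)"
proof (induction n)
  case 0
  then show ?case using S unfolding schubert_consts_def by simp
next
  case (Suc n)
  have supp: "\<And>n m k. c n m k \<noteq> 0 \<Longrightarrow> max n m \<le> k \<and> k \<le> n + m"
    using S unfolding schubert_consts_def by blast
  have z: "c n m (n+m+1) = 0" using supp[of n m "n+m+1"] by force
  have r: "real (n+1) * c (n+1) m (n+m+1) = real (n+m+1) * c n m (n+m)"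
    using rec_c[OF S, of "n+m+1" n m] z by simp
  have b: "real (n+1) * real ((n+m+1) choose (n+1)) = real (n+m+1) * real ((n+m) choose n)"
    using Suc_times_binomial_eq[of "n+m" n] by (metis of_nat_mult add_Suc Suc_eq_plus1 mult.commute)
  have "real (n+1) * c (n+1) m (n+m+1) = real (n+1) * real ((n+m+1) choose (n+1))"
    using r b Suc by simp
  then show ?case by simp
qed

definition Sq :: "real \<Rightarrow> real \<Rightarrow> nat \<Rightarrow> real" where
  "Sq a0 a1 N = (\<Sum>j<N. chev_q a0 a1 j)"

lemma sub_c:
  assumes S: "schubert_consts a0 a1 c" and m: "m \<ge> 1"
  shows "real (n+m) * c n m (n + m - 1) = real ((n + m) choose n) * (Sq a0 a1 (n+m) - Sq a0 a1 m - Sq a0 a1 n)"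
proof (induction n)
  case 0
  have "c 0 m (m-1) = 0" using S m unfolding schubert_consts_def by simp
  then show ?case by (simp add: Sq_def)
next
  case (Suc n)
  have r: "real (n+1) * c (n+1) m (n+m) = (chev_q a0 a1 (n+m) - chev_q a0 a1 n) * c n m (n+m) + real (n+m) * c n m (n+m-1)"
    using rec_c[OF S, of "n+m" n m] m by simp
  have t: "c n m (n+m) = real ((n + m) choose n)" by (rule top_c[OF S])
  have b: "real (n+1) * real ((n+m+1) choose (n+1)) = real (n+m+1) * real ((n+m) choose n)"
    using Suc_times_binomial_eq[of "n+m" n] by (metis of_nat_mult add_Suc Suc_eq_plus1 mult.commute)
  have sq: "Sq a0 a1 (n+1+m) = Sq a0 a1 (n+m) + chev_q a0 a1 (n+m)" "Sq a0 a1 (n+1) = Sq a0 a1 n + chev_q a0 a1 n"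
    by (simp_all add: Sq_def)
  have "real (n+1) * (real (n+1+m) * c (n+1) m (n+1+m-1)) = real (n+1) * (real ((n+1+m) choose (n+1)) * (Sq a0 a1 (n+1+m) - Sq a0 a1 m - Sq a0 a1 (n+1)))"
  proof -
    have "real (n+1) * (real (n+1+m) * c (n+1) m (n+1+m-1)) = real (n+m+1) * (real (n+1) * c (n+1) m (n+m))"
      by (simp add: algebra_simps)
    also have "\<dots> = real (n+m+1) * ((chev_q a0 a1 (n+m) - chev_q a0 a1 n) * real ((n + m) choose n) + real ((n + m) choose n) * (Sq a0 a1 (n+m) - Sq a0 a1 m - Sq a0 a1 n))"
      using r t Suc by simp
    also have "\<dots> = (real (n+m+1) * real ((n + m) choose n)) * (Sq a0 a1 (n+1+m) - Sq a0 a1 m - Sq a0 a1 (n+1))"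
      using sq by (simp add: algebra_simps)
    also have "\<dots> = real (n+1) * (real ((n+1+m) choose (n+1)) * (Sq a0 a1 (n+1+m) - Sq a0 a1 m - Sq a0 a1 (n+1)))"
    proof -
      have b': "real (n+1) * real ((n+1+m) choose (n+1)) = real (n+m+1) * real ((n+m) choose n)"
        using b by (simp add: add.commute add.left_commute)
      show ?thesis unfolding mult.assoc[symmetric] b' ..
    qed
    finally show ?thesis .
  qed
  then show ?case by (simp del: of_nat_add)
qed


lemma q_even: "chev_q a0 a1 (2*i) = real i ^ 2 * a0 + (real i ^ 2 + real i) * a1"
  unfolding chev_q_def by simp
lemma q_odd: "chev_q a0 a1 (2*i+1) = (real i + 1) ^ 2 * a0 + (real i ^ 2 + real i) * a1"
  unfolding chev_q_def by simp

lemma Sq_even: "Sq a0 a1 (2*i) = ((2*real i^3 + real i) * a0 + (2*real i^3 - 2*real i) * a1) / 3"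
proof (induction i)
  case 0 then show ?case by (simp add: Sq_def)
next
  case (Suc i)
  have "Sq a0 a1 (2*Suc i) = Sq a0 a1 (2*i) + chev_q a0 a1 (2*i) + chev_q a0 a1 (2*i+1)"
    by (simp add: Sq_def)
  moreover note q_even[of a0 a1 i] q_odd[of a0 a1 i] Suc
  ultimately have "Sq a0 a1 (2*Suc i) = ((2*real i^3 + real i) * a0 + (2*real i^3 - 2*real i) * a1) / 3
     + (real i ^ 2 * a0 + (real i ^ 2 + real i) * a1) + ((real i + 1) ^ 2 * a0 + (real i ^ 2 + real i) * a1)"
    by simp
  then show ?case by (simp add: field_simps power3_eq_cube power2_eq_square)
qed

lemma Sq_odd: "Sq a0 a1 (2*i+1) = ((2*real i^3 + real i) * a0 + (2*real i^3 - 2*real i) * a1) / 3 + real i ^ 2 * a0 + (real i ^ 2 + real i) * a1"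
proof -
  have "Sq a0 a1 (2*i+1) = Sq a0 a1 (2*i) + chev_q a0 a1 (2*i)" by (simp add: Sq_def)
  then show ?thesis using Sq_even[of a0 a1 i] q_even[of a0 a1 i] by simp
qed



lemma H_ee: "Sq a0 a1 (2*a+2*b) - Sq a0 a1 (2*b) - Sq a0 a1 (2*a) = real (2*a+2*b) * (real (2*a) * real (2*b) / 4 * (a0+a1))"
proof -
  have e: "Sq a0 a1 (2*a+2*b) = ((2*real (a+b)^3 + real (a+b)) * a0 + (2*real (a+b)^3 - 2*real (a+b)) * a1) / 3"
    using Sq_even[of a0 a1 "a+b"] by (simp add: distrib_left)
  show ?thesis unfolding e Sq_even by (simp add: field_simps power3_eq_cube)
qed

lemma H_oo: "Sq a0 a1 ((2*a+1)+(2*b+1)) - Sq a0 a1 (2*b+1) - Sq a0 a1 (2*a+1) = real ((2*a+1)+(2*b+1)) / 4 * ((1 + real (2*a+1) * real (2*b+1)) * a0 + (-1 + real (2*a+1) * real (2*b+1)) * a1)"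
proof -
  have e: "Sq a0 a1 ((2*a+1)+(2*b+1)) = ((2*real (a+b+1)^3 + real (a+b+1)) * a0 + (2*real (a+b+1)^3 - 2*real (a+b+1)) * a1) / 3"
    using Sq_even[of a0 a1 "a+b+1"] by (simp add: distrib_left)
  show ?thesis unfolding e Sq_odd by (simp add: field_simps power3_eq_cube power2_eq_square)
qed

lemma H_eo: "Sq a0 a1 (2*a+(2*b+1)) - Sq a0 a1 (2*b+1) - Sq a0 a1 (2*a) = real (2*a) / 4 * ((-1 + real (2*a) * real (2*b+1) + real (2*b+1)^2) * a0 + (1 + real (2*a) * real (2*b+1) + real (2*b+1)^2) * a1)"
proof -
  have e: "Sq a0 a1 (2*a+(2*b+1)) = ((2*real (a+b)^3 + real (a+b)) * a0 + (2*real (a+b)^3 - 2*real (a+b)) * a1) / 3 + real (a+b) ^ 2 * a0 + (real (a+b) ^ 2 + real (a+b)) * a1"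
    using Sq_odd[of a0 a1 "a+b"] by (simp add: distrib_left add.assoc)
  show ?thesis unfolding e Sq_odd Sq_even by (simp add: field_simps power3_eq_cube power2_eq_square)
qed

theorem mainTheorem6:
  fixes a0 a1 :: real and c :: "nat \<Rightarrow> nat \<Rightarrow> nat \<Rightarrow> real" and n m :: nat
  assumes "schubert_consts a0 a1 c" and "n \<ge> 1" and "m \<ge> 1"
  shows "c n m (n + m) = real ((n + m) choose n)
    \<and> c n m (n + m - 1) =
      (if even n \<and> even m then
         1/4 * (fact (n + m) / (fact (n - 1) * fact (m - 1))) * (a0 + a1)
       else if odd n \<and> odd m then
         1/4 * (fact (n + m) / (fact n * fact m))
           * ((1 + real n * real m) * a0 + (-1 + real n * real m) * a1)
       else if even n \<and> odd m then
         1/4 * (fact (n + m - 1) / (fact (n - 1) * fact m))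
           * ((-1 + real n * real m + (real m)^2) * a0 + (1 + real n * real m + (real m)^2) * a1)
       else
         1/4 * (fact (n + m - 1) / (fact n * fact (m - 1)))
           * ((-1 + real n * real m + (real n)^2) * a0 + (1 + real n * real m + (real n)^2) * a1))"
  proof -
  note nm = assms(2,3)
  define C where "C = real ((n + m) choose n)"
  define H where "H = Sq a0 a1 (n+m) - Sq a0 a1 m - Sq a0 a1 n"
  have top: "c n m (n + m) = real ((n + m) choose n)" by (rule top_c[OF assms(1)])
  have cS: "real (n+m) * c n m (n+m-1) = C * H" unfolding C_def H_def by (rule sub_c[OF assms(1) assms(3)])
  have pos: "real (n+m) > 0" using nm by simp
  have d: "c n m (n+m-1) = C * H / real (n+m)" using cS pos by (simp add: field_simps)
  have Cf: "C = fact (n+m) / (fact n * fact m)" unfolding C_def using binomial_fact[of n "n+m"] by simp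
  have fn: "fact n = real n * fact (n-1)" using fact_reduce[of n] nm by simp
  have fm: "fact m = real m * fact (m-1)" using fact_reduce[of m] nm by simp
  have fnm: "fact (n+m) = real (n+m) * fact (n+m-1)" using fact_reduce[of "n+m"] nm by simp
  have nz: "fact (n-1) \<noteq> (0::real)" "fact (m-1) \<noteq> (0::real)" "fact (n+m-1) \<noteq> (0::real)" by simp_all
  have goal2: "c n m (n + m - 1) =
      (if even n \<and> even m then
         1/4 * (fact (n + m) / (fact (n - 1) * fact (m - 1))) * (a0 + a1)
       else if odd n \<and> odd m then
         1/4 * (fact (n + m) / (fact n * fact m))
           * ((1 + real n * real m) * a0 + (-1 + real n * real m) * a1)
       else if even n \<and> odd m then
         1/4 * (fact (n + m - 1) / (fact (n - 1) * fact m))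
           * ((-1 + real n * real m + (real m)^2) * a0 + (1 + real n * real m + (real m)^2) * a1)
       else
         1/4 * (fact (n + m - 1) / (fact n * fact (m - 1)))
           * ((-1 + real n * real m + (real n)^2) * a0 + (1 + real n * real m + (real n)^2) * a1))"
  proof (cases "even n"; cases "even m")
    assume en: "even n" and em: "even m"
    then obtain a b where ab: "n = 2*a" "m = 2*b" by (auto elim!: evenE)
    have hH: "H = real (n+m) * (real n * real m / 4 * (a0+a1))" unfolding H_def ab by (rule H_ee)
    have "c n m (n+m-1) = C * (real n * real m / 4 * (a0+a1))" unfolding d hH using pos by (simp add: field_simps)
    also have "\<dots> = 1/4 * (fact (n + m) / (fact (n - 1) * fact (m - 1))) * (a0 + a1)"
      unfolding Cf fn fm using nz nm by (simp add: field_simps)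
    finally show ?thesis using en em by simp
  next
    assume en: "odd n" and em: "odd m"
    then obtain a b where ab: "n = 2*a+1" "m = 2*b+1" by (auto elim!: oddE)
    have hH0: "H = real (n+m) / 4 * ((1 + real n * real m) * a0 + (-1 + real n * real m) * a1)" unfolding H_def ab by (rule H_oo)
    have "c n m (n+m-1) = C * (1/4 * ((1 + real n * real m) * a0 + (-1 + real n * real m) * a1))" unfolding d hH0 using pos by (simp add: field_simps)
    also have "\<dots> = 1/4 * (fact (n + m) / (fact n * fact m))
           * ((1 + real n * real m) * a0 + (-1 + real n * real m) * a1)"
      unfolding Cf by simp
    finally show ?thesis using en em by simp
  next
    assume en: "even n" and em: "odd m"
    then obtain a b where ab: "n = 2*a" "m = 2*b+1" by (auto elim!: evenE oddE)
    have hH1: "H = real n / 4 * ((-1 + real n * real m + (real m)^2) * a0 + (1 + real n * real m + (real m)^2) * a1)" unfolding H_def ab by (rule H_eo)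
    have "c n m (n+m-1) = C * real n / real (n+m) * (1/4 * ((-1 + real n * real m + (real m)^2) * a0 + (1 + real n * real m + (real m)^2) * a1))" unfolding d hH1 using pos by (simp add: field_simps)
    also have "\<dots> = 1/4 * (fact (n + m - 1) / (fact (n - 1) * fact m))
           * ((-1 + real n * real m + (real m)^2) * a0 + (1 + real n * real m + (real m)^2) * a1)"
    proof -
      have k: "C * real n / real (n+m) = fact (n+m-1) / (fact (n-1) * fact m)"
        unfolding Cf fn fnm using nz nm pos by (simp add: field_simps del: of_nat_add)
      show ?thesis unfolding k by simp
    qed
    finally show ?thesis using en em by simp
  next
    assume en: "odd n" and em: "even m"
    then obtain a b where ab: "n = 2*a+1" "m = 2*b" by (auto elim!: evenE oddE)
    have "Sq a0 a1 (m+n) - Sq a0 a1 n - Sq a0 a1 m = real m / 4 * ((-1 + real m * real n + (real n)^2) * a0 + (1 + real m * real n + (real n)^2) * a1)" unfolding ab by (rule H_eo)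
    then have hH2: "H = real m / 4 * ((-1 + real n * real m + (real n)^2) * a0 + (1 + real n * real m + (real n)^2) * a1)"
      unfolding H_def by (simp add: add.commute mult.commute)
    have "c n m (n+m-1) = C * real m / real (n+m) * (1/4 * ((-1 + real n * real m + (real n)^2) * a0 + (1 + real n * real m + (real n)^2) * a1))" unfolding d hH2 using pos by (simp add: field_simps)
    also have "\<dots> = 1/4 * (fact (n + m - 1) / (fact n * fact (m - 1)))
           * ((-1 + real n * real m + (real n)^2) * a0 + (1 + real n * real m + (real n)^2) * a1)"
    proof -
      have k: "C * real m / real (n+m) = fact (n+m-1) / (fact n * fact (m-1))"
        unfolding Cf fm fnm using nz nm pos by (simp add: field_simps del: of_nat_add)
      show ?thesis unfolding k by simp
    qed
    finally show ?thesis using en em by simp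
  qed
  show ?thesis using top goal2 by simp
qed

end
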